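(* Let $G=K(n_1,\dots,n_s)$ be a complete $s$-partite graph ($s\ge 2$) with $1\le n_j\le 2$ for all $j\in\{1,\dots,s\}$. Then $\chi_3(G)=\left\lceil \frac{n_1+n_2+\cdots+n_s}{4}\right\rceil$.
   Context: $K(n_1,\dots,n_s)$ denotes the complete $s$-partite graph whose parts have $n_1,\dots,n_s$ vertices. A map $f:V(G)\to\{1,\dots,k\}$ is a $3$-relaxed $k$-coloring if every vertex $u$ has at most $3$ neighbors $v$ with $f(v)=f(u)$; $\chi_3(G)$ is the minimum $k$ for which such a coloring exists. *)

theory Defs
  imports Complex_Main
begin

text \<open>A finite simple graph is given by a vertex set V and a symmetric, irreflexive
adjacency predicate E.\<close>

text \<open>Complete s-partite graph K(n_1,...,n_s): parts indexed by j < s (0-based),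
part j has vertices (j,i) with i < n j; two vertices are adjacent iff they lie in
different parts.\<close>
definition cmp_vertices :: "nat \<Rightarrow> (nat \<Rightarrow> nat) \<Rightarrow> (nat \<times> nat) set" where
  "cmp_vertices s n = {(j, i). j < s \<and> i < n j}"

definition cmp_adj :: "nat \<times> nat \<Rightarrow> nat \<times> nat \<Rightarrow> bool" where
  "cmp_adj u v \<longleftrightarrow> fst u \<noteq> fst v"

definition relaxed_coloring ::
  "nat \<Rightarrow> 'a set \<Rightarrow> ('a \<Rightarrow> 'a \<Rightarrow> bool) \<Rightarrow> nat \<Rightarrow> ('a \<Rightarrow> nat) \<Rightarrow> bool" where
  "relaxed_coloring d V E k f \<longleftrightarrow>
     (\<forall>u\<in>V. f u \<in> {1..k}) \<and>
     (\<forall>u\<in>V. card {v\<in>V. E u v \<and> f v = f u} \<le> d)"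

definition relaxed_chromatic :: "nat \<Rightarrow> 'a set \<Rightarrow> ('a \<Rightarrow> 'a \<Rightarrow> bool) \<Rightarrow> nat" where
  "relaxed_chromatic d V E = (LEAST k. \<exists>f. relaxed_coloring d V E k f)"

end

theory Submission
  imports Defs
begin

lemma ceil_eq: "nat \<lceil>real (N::nat) / 4\<rceil> = (N + 3) div 4"
proof -
  have "\<lceil>real N / 4\<rceil> = int ((N + 3) div 4)"
  proof (rule ceiling_unique)
    show "real_of_int (int ((N + 3) div 4)) - 1 < real N / 4"
    proof -
      have "4 * ((N + 3) div 4) < N + 4" by linarith
      hence "real (4 * ((N + 3) div 4)) < real N + 4" by linarith
      thus ?thesis by simp
    qed
    show "real N / 4 \<le> real_of_int (int ((N + 3) div 4))"
    proof -
      have "N \<le> 4 * ((N + 3) div 4)" by linarith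
      hence "real N \<le> real (4 * ((N + 3) div 4))" by linarith
      thus ?thesis by simp
    qed
  qed
  thus ?thesis by simp
qed

lemma V_eq: "cmp_vertices s n = (SIGMA j:{..<s}. {..<n j})"
  unfolding cmp_vertices_def by auto

lemma card_V: "card (cmp_vertices s n) = (\<Sum>j<s. n j)"
  unfolding V_eq by (simp add: card_SigmaI)

lemma fin_V: "finite (cmp_vertices s n)"
  unfolding V_eq by auto

lemma class_bound:
  assumes n2: "\<And>j. j < s \<Longrightarrow> n j \<le> 2"
    and col: "\<forall>u\<in>cmp_vertices s n. card {v\<in>cmp_vertices s n. cmp_adj u v \<and> f v = f u} \<le> 3"
  shows "card {v\<in>cmp_vertices s n. f v = c} \<le> 4"
proof (rule ccontr)
  define V where "V = cmp_vertices s n"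
  define C where "C = {v\<in>V. f v = c}"
  assume "\<not> card {v\<in>cmp_vertices s n. f v = c} \<le> 4"
  hence big: "card C \<ge> 5" unfolding C_def V_def by simp
  have finC: "finite C" unfolding C_def V_def using fin_V by auto
  have key: "card C \<le> 5 \<and> (C \<inter> {v. fst v = fst u} = {(fst u,0),(fst u,1)})" if uC: "u \<in> C" for u
  proof -
    define P where "P = {v::nat\<times>nat. fst v = fst u}"
    have nb: "{v\<in>V. cmp_adj u v \<and> f v = f u} = C - P"
      using uC unfolding C_def P_def cmp_adj_def by auto
    have le3: "card (C - P) \<le> 3" using col uC nb unfolding C_def V_def by auto
    have sub: "C \<inter> P \<subseteq> {(fst u,0),(fst u,1)}"
    proof
      fix v assume "v \<in> C \<inter> P"
      hence "v \<in> V" "fst v = fst u" unfolding C_def P_def by auto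
      then obtain i where "v = (fst u, i)" "i < n (fst u)" "fst u < s"
        unfolding V_def cmp_vertices_def by (cases v) auto
      with n2[of "fst u"] show "v \<in> {(fst u,0),(fst u,1)}" by auto
    qed
    have c2: "card (C \<inter> P) \<le> 2"
      using card_mono[OF _ sub] by (simp add: card_insert_if)
    have dec: "card C = card (C - P) + card (C \<inter> P)"
      using card_Int_Diff[OF finC, of P] by simp
    have "card (C \<inter> P) \<ge> 2" using dec le3 big by linarith
    hence "C \<inter> P = {(fst u,0),(fst u,1)}"
      using card_seteq[OF _ sub] by (simp add: card_insert_if)
    thus ?thesis using dec le3 c2 unfolding P_def by linarith
  qed
  define J where "J = fst ` C"
  have "C = J \<times> {0,1}"
  proof
    show "C \<subseteq> J \<times> {0,1}"
    proof
      fix v assume vC: "v \<in> C"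
      have "v \<in> C \<inter> {w. fst w = fst v}" using vC by simp
      hence "v \<in> {(fst v,0),(fst v,1)}" using key[OF vC] by simp
      moreover have "fst v \<in> J" using vC unfolding J_def by blast
      ultimately show "v \<in> J \<times> {0,1}" by (cases v) auto
    qed
    show "J \<times> {0,1} \<subseteq> C"
    proof
      fix v assume "v \<in> J \<times> {0::nat,1}"
      then obtain u where uC: "u \<in> C" and v: "fst v = fst u" "snd v \<in> {0,1}"
        unfolding J_def by auto
      have "v \<in> {(fst u,0),(fst u,1)}" using v by (cases v) auto
      thus "v \<in> C" using key[OF uC] by blast
    qed
  qed
  hence "card C = 2 * card J"
    by (simp add: card_cartesian_product)
  moreover have "card C \<le> 5"
  proof -
    have "C \<noteq> {}" using big by auto
    then obtain u where "u \<in> C" by blast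
    thus ?thesis using key by blast
  qed
  ultimately show False using big by presburger
qed

theorem lemma5p6:
  fixes s :: nat and n :: "nat \<Rightarrow> nat"
  assumes "s \<ge> 2"
    and "\<And>j. j < s \<Longrightarrow> 1 \<le> n j \<and> n j \<le> 2"
  shows "relaxed_chromatic 3 (cmp_vertices s n) cmp_adj
           = nat \<lceil>real (\<Sum>j<s. n j) / 4\<rceil>"
proof -
  define V where "V = cmp_vertices s n"
  define N where "N = (\<Sum>j<s. n j)"
  have cardV: "card V = N" unfolding V_def N_def by (rule card_V)
  have finV: "finite V" unfolding V_def by (rule fin_V)
  have lower: "(N + 3) div 4 \<le> k" if "relaxed_coloring 3 V cmp_adj k f" for k f
  proof -
    have rng: "\<forall>u\<in>V. f u \<in> {1..k}" and col: "\<forall>u\<in>V. card {v\<in>V. cmp_adj u v \<and> f v = f u} \<le> 3"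
      using that unfolding relaxed_coloring_def by auto
    have cb: "card {v\<in>V. f v = c} \<le> 4" for c
      unfolding V_def using class_bound[of s n f c] assms(2) col unfolding V_def by auto
    have "V = (\<Union>c\<in>{1..k}. {v\<in>V. f v = c})" using rng by auto
    hence "card V \<le> (\<Sum>c\<in>{1..k}. card {v\<in>V. f v = c})"
      by (metis card_UN_le finite_atLeastAtMost)
    also have "\<dots> \<le> (\<Sum>c\<in>{1..k}. 4)" by (rule sum_mono) (rule cb)
    finally have "N \<le> 4 * k" using cardV by simp
    thus ?thesis by linarith
  qed
  obtain g where g: "bij_betw g V {..<N}"
    using ex_bij_betw_finite_nat[OF finV] cardV by (metis atLeast0LessThan)
  define f where "f u = g u div 4 + 1" for u
  have colf: "relaxed_coloring 3 V cmp_adj ((N + 3) div 4) f"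
    unfolding relaxed_coloring_def
  proof (intro conjI ballI)
    fix u assume uV: "u \<in> V"
    have "g u < N" using g uV by (auto simp: bij_betw_def)
    thus "f u \<in> {1..(N + 3) div 4}" unfolding f_def by auto
    define c where "c = g u div 4"
    have sub: "{v\<in>V. cmp_adj u v \<and> f v = f u} \<subseteq> {v\<in>V. g v div 4 = c} - {u}"
      unfolding f_def c_def cmp_adj_def by auto
    have inj: "inj_on g V" using g by (auto simp: bij_betw_def)
    have "g ` {v\<in>V. g v div 4 = c} \<subseteq> {4*c..<4*c+4}" by auto
    hence "card (g ` {v\<in>V. g v div 4 = c}) \<le> 4"
      by (metis card_atLeastLessThan card_mono finite_atLeastLessThan add_diff_cancel_left')
    moreover have "card (g ` {v\<in>V. g v div 4 = c}) = card {v\<in>V. g v div 4 = c}"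
      by (rule card_image) (rule inj_on_subset[OF inj], auto)
    ultimately have c4: "card {v\<in>V. g v div 4 = c} \<le> 4" by simp
    have "card ({v\<in>V. g v div 4 = c} - {u}) = card {v\<in>V. g v div 4 = c} - 1"
      using uV finV by (simp add: c_def)
    hence "card ({v\<in>V. g v div 4 = c} - {u}) \<le> 3" using c4 by linarith
    moreover have "card {v\<in>V. cmp_adj u v \<and> f v = f u} \<le> card ({v\<in>V. g v div 4 = c} - {u})"
      by (rule card_mono) (use finV sub in auto)
    ultimately show "card {v\<in>V. cmp_adj u v \<and> f v = f u} \<le> 3" by linarith
  qed
  have "relaxed_chromatic 3 V cmp_adj = (N + 3) div 4"
    unfolding relaxed_chromatic_def
    by (rule Least_equality) (use colf lower in auto)
  thus ?thesis unfolding V_def N_def ceil_eq .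
qed

end
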